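(* Fix a sensor index $k$, integers $N\ge1$, $B_k\ge1$, $\Delta^{\max}\ge2$, probabilities $p_{k,1},\dots,p_{k,N}\in[0,1]$, $\lambda_k\in[0,1]$, and $\mu\ge0$. Let $\mathcal{S}_k=\{0,\dots,N\}\times\{0,\dots,B_k\}\times\{1,\dots,\Delta^{\max}\}$, $\mathcal{A}_k=\{0,1\}$, $c_k(s,a)=r\min\{(1-a\mathbf{1}\{b\ge1\})\Delta+1,\Delta^{\max}\}$ for $s=(r,b,\Delta)$, and let $\Pr(s'\mid s,a)$ be the transition probabilities defined as follows for $s'=(r',b',\Delta')$: $r'$ is distributed as $\sum_{n=1}^N X_n$ with independent $X_n\sim$ Bernoulli$(p_{k,n})$, independently of everything else; $b'=\min\{b+e-a\mathbf{1}\{b\ge1\},B_k\}$ with $e\sim$ Bernoulli$(\lambda_k)$ independent; $\Delta'=\min\{(1-a\mathbf{1}\{b\ge1\})\Delta+1,\Delta^{\max}\}$. Fix a reference state $s_{\mathrm{ref}}\in\mathcal{S}_k$, set $V^{(0)}\equiv0$, $h^{(0)}\equiv0$, and for $i=0,1,\dots$ define $V^{(i+1)}(s)=\min_{a\in\mathcal{A}_k}\big[c_k(s,a)+\mu a+\sum_{s'\in\mathcal{S}_k}\Pr(s'\mid s,a)h^{(i)}(s')\big]$, $h^{(i+1)}(s)=V^{(i+1)}(s)-V^{(i+1)}(s_{\mathrm{ref}})$. Let $V$ be the limit of $V^{(i)}$ as $i\to\infty$. Then $V$ is non-decreasing with respect to the AoI: for any two states $s=(r,b,\Delta)$ and $\bar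 s=(r,b,\bar\Delta)$ in $\mathcal{S}_k$ with $\bar\Delta\ge\Delta$, we have $V(\bar s)\ge V(s)$.
   Context: The iteration above is the relative value iteration algorithm for the per-sensor MDP with state space $\mathcal{S}_k$, action space $\mathcal{A}_k$, transition probabilities $\Pr(s'\mid s,a)$ and per-stage cost $c_k(s,a)+\mu a$; the limit $V$ is assumed to exist. *)

theory Defs
  imports "HOL-Probability.Probability"
begin

type_synonym state = "nat \<times> nat \<times> nat"  (* (r, b, Delta) *)

definition state_space :: "nat \<Rightarrow> nat \<Rightarrow> nat \<Rightarrow> state set" where
  "state_space N B Dmax = {0..N} \<times> {0..B} \<times> {1..Dmax}"

fun bern_sum :: "(nat \<Rightarrow> real) \<Rightarrow> nat \<Rightarrow> nat pmf" where
  "bern_sum p 0 = return_pmf 0"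
| "bern_sum p (Suc n) =
     bind_pmf (bern_sum p n) (\<lambda>x. map_pmf (\<lambda>e. x + (if e then 1 else 0)) (bernoulli_pmf (p (Suc n))))"

definition served :: "nat \<Rightarrow> nat \<Rightarrow> nat" where
  "served b a = a * (if b \<ge> 1 then 1 else 0)"

definition cost :: "nat \<Rightarrow> state \<Rightarrow> nat \<Rightarrow> real" where
  "cost Dmax s a = (case s of (r, b, D) \<Rightarrow>
      real r * real (min ((1 - served b a) * D + 1) Dmax))"

definition next_pmf :: "(nat \<Rightarrow> real) \<Rightarrow> real \<Rightarrow> nat \<Rightarrow> nat \<Rightarrow> nat \<Rightarrow> state \<Rightarrow> nat \<Rightarrow> state pmf" where
  "next_pmf p lam N B Dmax s a = (case s of (r, b, D) \<Rightarrow>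
      bind_pmf (bern_sum p N) (\<lambda>r'.
      map_pmf (\<lambda>e. (r', min (b + (if e then 1 else 0) - served b a) B,
                          min ((1 - served b a) * D + 1) Dmax))
              (bernoulli_pmf lam)))"

definition trans_prob :: "(nat \<Rightarrow> real) \<Rightarrow> real \<Rightarrow> nat \<Rightarrow> nat \<Rightarrow> nat \<Rightarrow> state \<Rightarrow> nat \<Rightarrow> state \<Rightarrow> real" where
  "trans_prob p lam N B Dmax s a s' = pmf (next_pmf p lam N B Dmax s a) s'"

text \<open>Relative value iteration: rvi i = (V^(i), h^(i)).\<close>
fun rvi :: "(nat \<Rightarrow> real) \<Rightarrow> real \<Rightarrow> real \<Rightarrow> nat \<Rightarrow> nat \<Rightarrow> nat \<Rightarrow> state \<Rightarrow> nat
            \<Rightarrow> (state \<Rightarrow> real) \<times> (state \<Rightarrow> real)" where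
  "rvi p lam mu N B Dmax sref 0 = ((\<lambda>_. 0), (\<lambda>_. 0))"
| "rvi p lam mu N B Dmax sref (Suc i) =
     (let h = snd (rvi p lam mu N B Dmax sref i);
          Q = (\<lambda>s a. cost Dmax s a + mu * real a
                 + (\<Sum>s'\<in>state_space N B Dmax. trans_prob p lam N B Dmax s a s' * h s'));
          V' = (\<lambda>s. Min ((Q s) ` {0, 1}))
      in (V', (\<lambda>s. V' s - V' sref)))"

definition Vit :: "(nat \<Rightarrow> real) \<Rightarrow> real \<Rightarrow> real \<Rightarrow> nat \<Rightarrow> nat \<Rightarrow> nat \<Rightarrow> state \<Rightarrow> nat \<Rightarrow> state \<Rightarrow> real" where
  "Vit p lam mu N B Dmax sref i = fst (rvi p lam mu N B Dmax sref i)"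

end

theory Submission
  imports Defs
begin

lemma bern_sum_set: "set_pmf (bern_sum p n) \<subseteq> {0..n}"
proof (induction n)
  case 0 then show ?case by simp
next
  case (Suc n) then show ?case by (auto simp: set_bind_pmf split: if_splits)
qed

definition Mb :: "(nat \<Rightarrow> real) \<Rightarrow> real \<Rightarrow> nat \<Rightarrow> nat \<Rightarrow> nat \<Rightarrow> nat \<Rightarrow> (nat \<times> nat) pmf" where
  "Mb p lam N B b a = bind_pmf (bern_sum p N) (\<lambda>r'. map_pmf (\<lambda>e. (r', min (b + (if e then 1 else 0) - served b a) B)) (bernoulli_pmf lam))"

lemma next_eq: "next_pmf p lam N B Dmax (r,b,D) a
   = map_pmf (\<lambda>(r',b'). (r',b', min ((1 - served b a) * D + 1) Dmax)) (Mb p lam N B b a)"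
  by (simp add: next_pmf_def Mb_def map_bind_pmf pmf.map_comp o_def)

lemma Mb_set: "set_pmf (Mb p lam N B b a) \<subseteq> {0..N} \<times> {0..B}"
  using bern_sum_set[of p N] by (auto simp: Mb_def set_bind_pmf)

lemma sum_eq:
  assumes "Dmax \<ge> 1"
  shows "(\<Sum>s'\<in>state_space N B Dmax. trans_prob p lam N B Dmax (r,b,D) a s' * h s')
    = measure_pmf.expectation (Mb p lam N B b a) (\<lambda>(r',b'). h (r',b',min ((1 - served b a) * D + 1) Dmax))"
proof -
  let ?F = "\<lambda>(r',b'). (r',b', min ((1 - served b a) * D + 1) Dmax)"
  have "measure_pmf.expectation (Mb p lam N B b a) (\<lambda>(r',b'). h (r',b',min ((1 - served b a) * D + 1) Dmax))
      = measure_pmf.expectation (map_pmf ?F (Mb p lam N B b a)) h"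
    by (simp add: integral_map_pmf case_prod_beta')
  also have "\<dots> = (\<Sum>s'\<in>state_space N B Dmax. h s' * pmf (map_pmf ?F (Mb p lam N B b a)) s')"
  proof (rule integral_measure_pmf_real)
    show "finite (state_space N B Dmax)" by (simp add: state_space_def)
    fix s' assume "s' \<in> set_pmf (map_pmf ?F (Mb p lam N B b a))"
    then show "s' \<in> state_space N B Dmax"
      using Mb_set[of p lam N B b a] assms by (auto simp: state_space_def)
  qed
  finally show ?thesis
    by (simp add: trans_prob_def next_eq mult.commute)
qed

lemma mono_all:
  assumes "Dmax \<ge> 1"
  shows "\<forall>r b D D'. D \<le> D' \<longrightarrow>
     fst (rvi p lam mu N B Dmax sref i) (r,b,D) \<le> fst (rvi p lam mu N B Dmax sref i) (r,b,D')
   \<and> snd (rvi p lam mu N B Dmax sref i) (r,b,D) \<le> snd (rvi p lam mu N B Dmax sref i) (r,b,D')"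
proof (induction i)
  case 0 then show ?case by simp
next
  case (Suc i)
  define h where "h = snd (rvi p lam mu N B Dmax sref i)"
  define Q where "Q = (\<lambda>s a. cost Dmax s a + mu * real a
                 + (\<Sum>s'\<in>state_space N B Dmax. trans_prob p lam N B Dmax s a s' * h s'))"
  have hm: "h (x,y,d) \<le> h (x,y,d')" if "d \<le> d'" for x y d d'
    using Suc.IH that by (simp add: h_def)
  have Qm: "Q (r,b,D) a \<le> Q (r,b,D') a" if "D \<le> D'" for r b D D' a
  proof -
    let ?g = "\<lambda>D. min ((1 - served b a) * D + 1) Dmax"
    have m: "(1 - served b a) * D \<le> (1 - served b a) * D'" by (rule mult_le_mono2[OF that])
    have g: "?g D \<le> ?g D'" by (rule min.mono) (use m in simp_all)
    have c: "cost Dmax (r,b,D) a \<le> cost Dmax (r,b,D') a"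
      using g by (simp add: cost_def mult_left_mono)
    have fin: "finite (set_pmf (Mb p lam N B b a))"
      using Mb_set[of p lam N B b a] finite_subset by blast
    have e: "measure_pmf.expectation (Mb p lam N B b a) (\<lambda>(r',b'). h (r',b',?g D))
         \<le> measure_pmf.expectation (Mb p lam N B b a) (\<lambda>(r',b'). h (r',b',?g D'))"
    proof (rule integral_mono)
      fix x :: "nat \<times> nat"
      show "(\<lambda>(r',b'). h (r',b',?g D)) x \<le> (\<lambda>(r',b'). h (r',b',?g D')) x"
        by (cases x) (simp only: case_prod_conv, rule hm[OF g])
    qed (simp_all add: integrable_measure_pmf_finite[OF fin])
    show ?thesis using c e by (simp add: Q_def sum_eq[OF assms])
  qed
  have Vm: "Min (Q (r,b,D) ` {0,1}) \<le> Min (Q (r,b,D') ` {0,1})" if "D \<le> D'" for r b D D'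
    using Qm[OF that, of r b 0] Qm[OF that, of r b 1] by (auto simp: min_def)
  have F: "fst (rvi p lam mu N B Dmax sref (Suc i)) = (\<lambda>s. Min (Q s ` {0,1}))"
    by (simp add: Let_def h_def Q_def)
  have S: "snd (rvi p lam mu N B Dmax sref (Suc i)) = (\<lambda>s. Min (Q s ` {0,1}) - Min (Q sref ` {0,1}))"
    by (simp add: Let_def h_def Q_def)
  show ?case
    unfolding F S using Vm by (meson diff_right_mono)
qed

theorem lemma1:
  fixes N B Dmax :: nat and p :: "nat \<Rightarrow> real" and lam mu :: real
    and sref :: state and V :: "state \<Rightarrow> real"
    and r b D D' :: nat
  assumes "N \<ge> 1" and "B \<ge> 1" and "Dmax \<ge> 2"
    and "\<forall>n\<in>{1..N}. 0 \<le> p n \<and> p n \<le> 1"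
    and "0 \<le> lam" and "lam \<le> 1" and "mu \<ge> 0"
    and "sref \<in> state_space N B Dmax"
    and "\<forall>s\<in>state_space N B Dmax. (\<lambda>i. Vit p lam mu N B Dmax sref i s) \<longlonglongrightarrow> V s"
    and "(r, b, D) \<in> state_space N B Dmax" and "(r, b, D') \<in> state_space N B Dmax"
    and "D' \<ge> D"
  shows "V (r, b, D') \<ge> V (r, b, D)"
proof (rule LIMSEQ_le)
  show "(\<lambda>i. Vit p lam mu N B Dmax sref i (r,b,D)) \<longlonglongrightarrow> V (r,b,D)" using assms by blast
  show "(\<lambda>i. Vit p lam mu N B Dmax sref i (r,b,D')) \<longlonglongrightarrow> V (r,b,D')" using assms by blast
  have "Dmax \<ge> 1" using assms by simp
  then show "\<exists>N'. \<forall>n\<ge>N'. Vit p lam mu N B Dmax sref n (r,b,D) \<le> Vit p lam mu N B Dmax sref n (r,b,D')"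
    using mono_all assms(12) by (auto simp: Vit_def)
qed

end
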